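(* Let $\phi$ be measurable, let $\mathcal{F}_{k-1}$ be the $\sigma$-algebra generated by $\{(\hat{\mathbf{x}}^i_{k-1},\mathbf{y}^i_{k-1})\}_{i=1}^N$, and assume: (a) $\rho(\cdot|\mathbf{x}_k)$ is bounded; (b) $\mathbb{E}\langle\pi^N_{k-1|k-1},\delta_T\rho|\phi|^4\rangle\le M\|\rho(\cdot|\mathbf{x}_k)\|_\infty\|\phi\|^4_{k-1,4}$ and $\langle\pi_{k-1|k-1},\delta_T\rho|\phi|^4\rangle\le\|\rho(\cdot|\mathbf{x}_k)\|_\infty\|\phi\|^4_{k-1,4}$, with $M$ independent of $N$; (c) almost surely, the conditional probability given $\mathcal{F}_{k-1}$ that a single draw of step (1) at time $k$ fails the acceptance test is at most $\epsilon_k<1$. Then $$\mathbb{E}\Big|\langle\widetilde\pi^N_{k|k-1},|\phi|^4\rangle-\tfrac1N\textstyle\sum_{i}\mathbb{E}[|\phi(\tilde{\hat{\mathbf{x}}}^i_k,\tilde{\mathbf{y}}^i_k)|^4|\mathcal{F}_{k-1}]\Big|\le\frac{2}{1-\epsilon_k}M\|\rho(\cdot|\mathbf{x}_k)\|_\infty\|\phi\|^4_{k-1,4},$$ $$\mathbb{E}\Big|\tfrac1N\textstyle\sum_{i}\mathbb{E}[|\phi(\tilde{\hat{\mathbf{x}}}^i_k,\tilde{\mathbf{y}}^i_k)|^4|\mathcal{F}_{k-1}]-\langle\pi^N_{k-1|k-1},\delta_T\rho|\phi|^4\rangle\Big|\le\frac{2-\epsilon_k}{1-\epsilon_k}M\|\rho(\cdot|\mathbf{x}_k)\|_\infty\|\phi\|^4_{k-1,4},$$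 $$\mathbb{E}\big|\langle\pi^N_{k-1|k-1},\delta_T\rho|\phi|^4\rangle-\langle\pi_{k|k-1},|\phi|^4\rangle\big|\le\|\rho(\cdot|\mathbf{x}_k)\|_\infty(M+1)\|\phi\|^4_{k-1,4}.$$
   Context: Notation: for a measure $\nu$ and function $\phi$, $\langle\nu,\phi\rangle=\int\phi\,d\nu$; $\|f\|_\infty$ is the supremum norm. Fixed data: integer $k\ge1$; deterministic vectors $\mathbf{x}_0,\dots,\mathbf{x}_k\in\mathbb{R}^{n_x}$ (defender's true states) and $\mathbf{a}_1,\dots,\mathbf{a}_k\in\mathbb{R}^{n_a}$ (defender's observations); a conditional density $\rho(\mathbf{y}|\mathbf{x})$ in $\mathbf{y}\in\mathbb{R}^{n_y}$; a conditional density $\beta(\mathbf{a}|\hat{\mathbf{x}})$ in $\mathbf{a}\in\mathbb{R}^{n_a}$, $\hat{\mathbf{x}}\in\mathbb{R}^{n_x}$; measurable maps $T_s:\mathbb{R}^{n_x}\times\mathbb{R}^{n_y}\to\mathbb{R}^{n_x}$, $s=1,\dots,k$ (the attacker's forward-filter update $\hat{\mathbf{x}}_s=T_s(\hat{\mathbf{x}}_{s-1},\mathbf{y}_s)$). Write $\beta_s(\hat{\mathbf{x}},\mathbf{y})=\beta(\mathbf{a}_s|\hat{\mathbf{x}})$ and, for a function $\psi$ of $(\hat{\mathbf{x}},\mathbf{y})$, $(\delta_T\rho\psi)_s(\hat{\mathbf{x}}',\mathbf{y}')=\int\psi(T_s(\hat{\mathbf{x}}',\mathbf{y}),\mathbf{y})\rho(\mathbf{y}|\mathbf{x}_s)\,d\mathbf{y}$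 (abbreviated $\delta_T\rho\psi$). Optimal inverse filter: probability measures on $\mathbb{R}^{n_x}\times\mathbb{R}^{n_y}$ defined from $\pi_{0|0}=\pi_0$ by $\langle\pi_{s|s-1},\psi\rangle=\langle\pi_{s-1|s-1},\delta_T\rho\psi\rangle$ and $\langle\pi_{s|s},\psi\rangle=\langle\pi_{s|s-1},\beta_s\psi\rangle/\langle\pi_{s|s-1},\beta_s\rangle$. I-PF with $N$ particles and thresholds $\gamma_s>0$: draw $\hat{\mathbf{x}}^i_0$ i.i.d. from a given distribution $\widetilde\pi^x_0$ and, independently, $\mathbf{y}^i_0$ i.i.d. from $\rho(\cdot|\mathbf{x}_0)$, $i=1,\dots,N$; $\pi_0$ is the (product) law of $(\hat{\mathbf{x}}^i_0,\mathbf{y}^i_0)$ and $\pi^N_{0|0}=\frac1N\sum_i\delta_{(\hat{\mathbf{x}}^i_0,\mathbf{y}^i_0)}$. For $s\ge1$, given particles $(\hat{\mathbf{x}}^i_{s-1},\mathbf{y}^i_{s-1})$: (1) draw conditionally i.i.d. $\bar{\mathbf{y}}^i_s\sim\rho(\cdot|\mathbf{x}_s)$ and set $\bar{\hat{\mathbf{x}}}^i_s=T_s(\hat{\mathbf{x}}^i_{s-1},\bar{\mathbf{y}}^i_s)$; (2) if $\frac1N\sum_i\beta(\mathbf{a}_s|\bar{\hat{\mathbf{x}}}^i_s)\ge\gamma_s$, accept and set $(\tilde{\hat{\mathbf{x}}}^i_s,\tilde{\mathbf{y}}^i_s)=(\bar{\hat{\mathbf{x}}}^i_s,\bar{\mathbf{y}}^i_s)$;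 otherwise redo (1) independently; (3) set $\widetilde\pi^N_{s|s-1}=\frac1N\sum_i\delta_{(\tilde{\hat{\mathbf{x}}}^i_s,\tilde{\mathbf{y}}^i_s)}$, weights $\omega^i_s=\beta(\mathbf{a}_s|\tilde{\hat{\mathbf{x}}}^i_s)/\sum_j\beta(\mathbf{a}_s|\tilde{\hat{\mathbf{x}}}^j_s)$, $\widetilde\pi^N_{s|s}=\sum_i\omega^i_s\delta_{(\tilde{\hat{\mathbf{x}}}^i_s,\tilde{\mathbf{y}}^i_s)}$; (4) draw $N$ conditionally i.i.d. $(\hat{\mathbf{x}}^i_s,\mathbf{y}^i_s)\sim\widetilde\pi^N_{s|s}$ and set $\pi^N_{s|s}=\frac1N\sum_i\delta_{(\hat{\mathbf{x}}^i_s,\mathbf{y}^i_s)}$. Expectations $\mathbb{E}$ are over the particle randomness. Norm: $\|\phi\|_{s,4}=\max\{1,\max_{0\le r\le s}\langle\pi_{r|r},|\phi|^4\rangle^{1/4}\}$. *)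

theory Defs
  imports "HOL-Probability.Probability"
begin

(* A particle cloud: particle i (i < N) is the pair (xhat^i, y^i).
   Clouds live in the product space PiM {..<N} (borel). *)
type_synonym ('x, 'y) cloud = "nat \<Rightarrow> 'x \<times> 'y"

definition cloud_space :: "nat \<Rightarrow> ('x::euclidean_space, 'y::euclidean_space) cloud measure" where
  "cloud_space N = PiM {..<N} (\<lambda>_. borel)"

definition supnorm :: "('y \<Rightarrow> real) \<Rightarrow> real" where
  "supnorm f = (\<Squnion>y. \<bar>f y\<bar>)"

definition ipf_prop1 ::
  "('x::euclidean_space \<Rightarrow> 'y::euclidean_space \<Rightarrow> 'x) \<Rightarrow> ('y \<Rightarrow> real) \<Rightarrow> 'x \<Rightarrow> ('x \<times> 'y) measure" where
  "ipf_prop1 Ts r xh = distr (density lborel (\<lambda>y. ennreal (r y))) borel (\<lambda>y. (Ts xh y, y))"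

definition delta_T_rho ::
  "(nat \<Rightarrow> 'x::euclidean_space \<Rightarrow> 'y::euclidean_space \<Rightarrow> 'x) \<Rightarrow> ('x \<Rightarrow> 'y \<Rightarrow> real) \<Rightarrow> (nat \<Rightarrow> 'x)
    \<Rightarrow> nat \<Rightarrow> ('x \<times> 'y \<Rightarrow> real) \<Rightarrow> 'x \<times> 'y \<Rightarrow> ennreal" where
  "delta_T_rho T \<rho> xs s \<psi> z = (\<integral>\<^sup>+ y. ennreal (\<psi> (T s (fst z) y, y) * \<rho> (xs s) y) \<partial>lborel)"

(* prediction: <pi_{s|s-1}, psi> = <pi_{s-1|s-1}, delta_T rho psi> *)
definition opt_pred ::
  "(nat \<Rightarrow> 'x::euclidean_space \<Rightarrow> 'y::euclidean_space \<Rightarrow> 'x) \<Rightarrow> ('x \<Rightarrow> 'y \<Rightarrow> real) \<Rightarrow> (nat \<Rightarrow> 'x)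
    \<Rightarrow> nat \<Rightarrow> ('x \<times> 'y) measure \<Rightarrow> ('x \<times> 'y) measure" where
  "opt_pred T \<rho> xs s \<mu> = bind \<mu> (\<lambda>z. ipf_prop1 (T s) (\<rho> (xs s)) (fst z))"

definition opt_upd ::
  "('x \<Rightarrow> 'o \<Rightarrow> real) \<Rightarrow> 'o \<Rightarrow> ('x \<times> 'y) measure \<Rightarrow> ('x \<times> 'y) measure" where
  "opt_upd \<beta> a P = density P (\<lambda>z. ennreal (\<beta> (fst z) a) / (\<integral>\<^sup>+ w. ennreal (\<beta> (fst w) a) \<partial>P))"

definition ipf_pi0 ::
  "'x::euclidean_space measure \<Rightarrow> ('x \<Rightarrow> 'y::euclidean_space \<Rightarrow> real) \<Rightarrow> (nat \<Rightarrow> 'x) \<Rightarrow> ('x \<times> 'y) measure" where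
  "ipf_pi0 pi0x \<rho> xs = pi0x \<Otimes>\<^sub>M density lborel (\<lambda>y. ennreal (\<rho> (xs 0) y))"

(* opt_filter ... s = pi_{s|s} *)
fun opt_filter ::
  "'x::euclidean_space measure \<Rightarrow> (nat \<Rightarrow> 'x \<Rightarrow> 'y::euclidean_space \<Rightarrow> 'x) \<Rightarrow> ('x \<Rightarrow> 'y \<Rightarrow> real)
    \<Rightarrow> ('x \<Rightarrow> 'o \<Rightarrow> real) \<Rightarrow> (nat \<Rightarrow> 'x) \<Rightarrow> (nat \<Rightarrow> 'o) \<Rightarrow> nat \<Rightarrow> ('x \<times> 'y) measure" where
  "opt_filter pi0x T \<rho> \<beta> xs as 0 = ipf_pi0 pi0x \<rho> xs"
| "opt_filter pi0x T \<rho> \<beta> xs as (Suc s) =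
     opt_upd \<beta> (as (Suc s)) (opt_pred T \<rho> xs (Suc s) (opt_filter pi0x T \<rho> \<beta> xs as s))"

definition norm4_pow4 ::
  "'x::euclidean_space measure \<Rightarrow> (nat \<Rightarrow> 'x \<Rightarrow> 'y::euclidean_space \<Rightarrow> 'x) \<Rightarrow> ('x \<Rightarrow> 'y \<Rightarrow> real)
    \<Rightarrow> ('x \<Rightarrow> 'o \<Rightarrow> real) \<Rightarrow> (nat \<Rightarrow> 'x) \<Rightarrow> (nat \<Rightarrow> 'o) \<Rightarrow> ('x \<times> 'y \<Rightarrow> real) \<Rightarrow> nat \<Rightarrow> ennreal" where
  "norm4_pow4 pi0x T \<rho> \<beta> xs as \<phi> s =
     max 1 (Max ((\<lambda>r. \<integral>\<^sup>+ z. ennreal (\<bar>\<phi> z\<bar> ^ 4) \<partial>opt_filter pi0x T \<rho> \<beta> xs as r) ` {..s}))"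

(* step (1): one batch of N proposals given the cloud c at time s-1 *)
definition ipf_proposal ::
  "nat \<Rightarrow> (nat \<Rightarrow> 'x::euclidean_space \<Rightarrow> 'y::euclidean_space \<Rightarrow> 'x) \<Rightarrow> ('x \<Rightarrow> 'y \<Rightarrow> real) \<Rightarrow> (nat \<Rightarrow> 'x)
    \<Rightarrow> nat \<Rightarrow> ('x, 'y) cloud \<Rightarrow> ('x, 'y) cloud measure" where
  "ipf_proposal N T \<rho> xs s c = PiM {..<N} (\<lambda>i. ipf_prop1 (T s) (\<rho> (xs s)) (fst (c i)))"

(* step (2): acceptance test *)
definition ipf_accept_set ::
  "nat \<Rightarrow> ('x::euclidean_space \<Rightarrow> 'o \<Rightarrow> real) \<Rightarrow> 'o \<Rightarrow> real \<Rightarrow> ('x, 'y::euclidean_space) cloud set" where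
  "ipf_accept_set N \<beta> a g = {c \<in> space (cloud_space N). g \<le> (\<Sum>i<N. \<beta> (fst (c i)) a) / real N}"

(* law of the accepted batch of the rejection loop: proposal conditioned on acceptance
   (the null measure if acceptance has probability 0, i.e. the loop never terminates) *)
definition ipf_accepted ::
  "nat \<Rightarrow> (nat \<Rightarrow> 'x::euclidean_space \<Rightarrow> 'y::euclidean_space \<Rightarrow> 'x) \<Rightarrow> ('x \<Rightarrow> 'y \<Rightarrow> real)
    \<Rightarrow> ('x \<Rightarrow> 'o \<Rightarrow> real) \<Rightarrow> (nat \<Rightarrow> 'x) \<Rightarrow> (nat \<Rightarrow> 'o) \<Rightarrow> (nat \<Rightarrow> real)
    \<Rightarrow> nat \<Rightarrow> ('x, 'y) cloud \<Rightarrow> ('x, 'y) cloud measure" where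
  "ipf_accepted N T \<rho> \<beta> xs as \<gamma> s c =
     uniform_measure (ipf_proposal N T \<rho> xs s c) (ipf_accept_set N \<beta> (as s) (\<gamma> s))"

definition ipf_weight_pmf ::
  "nat \<Rightarrow> ('x \<Rightarrow> 'o \<Rightarrow> real) \<Rightarrow> 'o \<Rightarrow> ('x, 'y) cloud \<Rightarrow> nat pmf" where
  "ipf_weight_pmf N \<beta> a c =
     embed_pmf (\<lambda>i. if i < N then \<beta> (fst (c i)) a / (\<Sum>j<N. \<beta> (fst (c j)) a) else 0)"

(* step (4): N i.i.d. draws from the weighted empirical measure *)
definition ipf_resample ::
  "nat \<Rightarrow> ('x::euclidean_space \<Rightarrow> 'o \<Rightarrow> real) \<Rightarrow> 'o \<Rightarrow> ('x, 'y::euclidean_space) cloud \<Rightarrow> ('x, 'y) cloud measure" where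
  "ipf_resample N \<beta> a c = PiM {..<N} (\<lambda>_. distr (measure_pmf (ipf_weight_pmf N \<beta> a c)) borel c)"

(* ipf_law ... s = law of the resampled cloud {(xhat^i_s, y^i_s)}_i, i.e. of pi^N_{s|s} *)
fun ipf_law ::
  "'x::euclidean_space measure \<Rightarrow> nat \<Rightarrow> (nat \<Rightarrow> 'x \<Rightarrow> 'y::euclidean_space \<Rightarrow> 'x) \<Rightarrow> ('x \<Rightarrow> 'y \<Rightarrow> real)
    \<Rightarrow> ('x \<Rightarrow> 'o \<Rightarrow> real) \<Rightarrow> (nat \<Rightarrow> 'x) \<Rightarrow> (nat \<Rightarrow> 'o) \<Rightarrow> (nat \<Rightarrow> real)
    \<Rightarrow> nat \<Rightarrow> ('x, 'y) cloud measure" where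
  "ipf_law pi0x N T \<rho> \<beta> xs as \<gamma> 0 = PiM {..<N} (\<lambda>_. ipf_pi0 pi0x \<rho> xs)"
| "ipf_law pi0x N T \<rho> \<beta> xs as \<gamma> (Suc s) =
     bind (ipf_law pi0x N T \<rho> \<beta> xs as \<gamma> s)
       (\<lambda>c. bind (ipf_accepted N T \<rho> \<beta> xs as \<gamma> (Suc s) c)
               (\<lambda>c'. ipf_resample N \<beta> (as (Suc s)) c'))"

(* joint law of (cloud at time k-1, accepted cloud {(tilde xhat^i_k, tilde y^i_k)}_i at time k) *)
definition ipf_joint ::
  "'x::euclidean_space measure \<Rightarrow> nat \<Rightarrow> (nat \<Rightarrow> 'x \<Rightarrow> 'y::euclidean_space \<Rightarrow> 'x) \<Rightarrow> ('x \<Rightarrow> 'y \<Rightarrow> real)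
    \<Rightarrow> ('x \<Rightarrow> 'o \<Rightarrow> real) \<Rightarrow> (nat \<Rightarrow> 'x) \<Rightarrow> (nat \<Rightarrow> 'o) \<Rightarrow> (nat \<Rightarrow> real)
    \<Rightarrow> nat \<Rightarrow> (('x, 'y) cloud \<times> ('x, 'y) cloud) measure" where
  "ipf_joint pi0x N T \<rho> \<beta> xs as \<gamma> k =
     bind (ipf_law pi0x N T \<rho> \<beta> xs as \<gamma> (k - 1))
       (\<lambda>c. distr (ipf_accepted N T \<rho> \<beta> xs as \<gamma> k c)
               (cloud_space N \<Otimes>\<^sub>M cloud_space N) (\<lambda>c'. (c, c')))"

(* F_{k-1}: sigma-algebra generated by the time-(k-1) particles (first component) *)
definition ipf_F :: "nat \<Rightarrow> (('x::euclidean_space, 'y::euclidean_space) cloud \<times> ('x, 'y) cloud) measure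
    \<Rightarrow> (('x, 'y) cloud \<times> ('x, 'y) cloud) measure" where
  "ipf_F N J = vimage_algebra (space J) fst (cloud_space N)"

end

theory Submission
  imports Defs
begin

lemma meas_slice:
  fixes f :: "'a::euclidean_space \<Rightarrow> 'b::euclidean_space \<Rightarrow> 'c::euclidean_space"
  assumes "case_prod f \<in> borel_measurable borel"
  shows "f x \<in> borel_measurable borel"
proof -
  have "(\<lambda>y. (x, y)) \<in> measurable borel (borel :: ('a \<times> 'b) measure)"
    unfolding borel_prod[symmetric] by measurable
  from measurable_compose[OF this assms] show ?thesis by simp
qed

lemma prob_dens:
  fixes r :: "'y::euclidean_space \<Rightarrow> real"
  assumes "(\<integral>\<^sup>+ y. ennreal (r y) \<partial>lborel) = 1" "r \<in> borel_measurable borel"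
  shows "prob_space (density lborel (\<lambda>y. ennreal (r y)))"
  apply (rule prob_spaceI)
  apply (subst emeasure_density)
  using assms by auto

lemma meas_Tpair:
  fixes Ts :: "'x::euclidean_space \<Rightarrow> 'y::euclidean_space \<Rightarrow> 'x"
  assumes "case_prod Ts \<in> borel_measurable borel"
  shows "(\<lambda>y. (Ts x y, y)) \<in> measurable (density lborel f) borel"
proof -
  have "Ts x \<in> borel_measurable borel" by (rule meas_slice[OF assms])
  then have 1: "(\<lambda>y. (Ts x y, y)) \<in> measurable borel (borel \<Otimes>\<^sub>M borel)" by measurable
  have "measurable (density lborel f) (borel :: ('x \<times> 'y) measure) = measurable borel (borel \<Otimes>\<^sub>M borel)"
    by (rule measurable_cong_sets) (simp, metis borel_prod)
  with 1 show ?thesis by simp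
qed

lemma meas_Tpair2:
  fixes Ts :: "'x::euclidean_space \<Rightarrow> 'y::euclidean_space \<Rightarrow> 'x"
  assumes "case_prod Ts \<in> borel_measurable borel"
  shows "case_prod (\<lambda>x y. (Ts x y, y)) \<in> measurable (borel \<Otimes>\<^sub>M density lborel f) borel"
proof -
  have [measurable]: "case_prod Ts \<in> borel_measurable (borel \<Otimes>\<^sub>M borel)"
    using assms by (simp add: borel_prod)
  have 1: "case_prod (\<lambda>x y. (Ts x y, y)) \<in> measurable (borel \<Otimes>\<^sub>M borel) (borel \<Otimes>\<^sub>M borel)"
    by measurable
  have "measurable (borel \<Otimes>\<^sub>M density lborel f) (borel :: ('x \<times> 'y) measure)
      = measurable (borel \<Otimes>\<^sub>M borel) (borel \<Otimes>\<^sub>M borel)"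
    by (rule measurable_cong_sets) (rule sets_pair_measure_cong, simp, simp, metis borel_prod)
  with 1 show ?thesis by simp
qed

lemma prob_Q:
  fixes r :: "'y::euclidean_space \<Rightarrow> real" and Ts :: "'x::euclidean_space \<Rightarrow> 'y \<Rightarrow> 'x"
  assumes "(\<integral>\<^sup>+ y. ennreal (r y) \<partial>lborel) = 1"
    "r \<in> borel_measurable borel" "case_prod Ts \<in> borel_measurable borel"
  shows "prob_space (ipf_prop1 Ts r x)"
  unfolding ipf_prop1_def
  by (rule prob_space.prob_space_distr[OF prob_dens[OF assms(1,2)] meas_Tpair[OF assms(3)]])

lemma meas_Q:
  fixes r :: "'y::euclidean_space \<Rightarrow> real" and Ts :: "'x::euclidean_space \<Rightarrow> 'y \<Rightarrow> 'x"
  assumes "(\<integral>\<^sup>+ y. ennreal (r y) \<partial>lborel) = 1"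
    "r \<in> borel_measurable borel" "case_prod Ts \<in> borel_measurable borel"
  shows "(\<lambda>x. ipf_prop1 Ts r x) \<in> measurable borel (subprob_algebra borel)"
proof -
  have pd: "prob_space (density lborel (\<lambda>y. ennreal (r y)))" by (rule prob_dens[OF assms(1,2)])
  have c: "(\<lambda>_::'x. density lborel (\<lambda>y. ennreal (r y))) \<in> measurable borel (subprob_algebra (density lborel (\<lambda>y. ennreal (r y))))"
    apply (rule measurable_const)
    using pd by (auto simp: space_subprob_algebra prob_space_imp_subprob_space)
  show ?thesis unfolding ipf_prop1_def
    by (rule measurable_distr2[OF meas_Tpair2[OF assms(3)] c])
qed

lemma int_Q:
  fixes r :: "'y::euclidean_space \<Rightarrow> real" and Ts :: "'x::euclidean_space \<Rightarrow> 'y \<Rightarrow> 'x"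
  assumes "\<forall>y. 0 \<le> r y" "r \<in> borel_measurable borel" "case_prod Ts \<in> borel_measurable borel"
    and "\<psi> \<in> borel_measurable borel" "\<forall>z. 0 \<le> \<psi> z"
  shows "(\<integral>\<^sup>+ z. ennreal (\<psi> z) \<partial>ipf_prop1 Ts r x) = (\<integral>\<^sup>+ y. ennreal (\<psi> (Ts x y, y) * r y) \<partial>lborel)"
proof -
  have m': "(\<lambda>y. (Ts x y, y)) \<in> measurable (density lborel (\<lambda>y. ennreal (r y))) borel"
    by (rule meas_Tpair[OF assms(3)])
  have m: "(\<lambda>y. (Ts x y, y)) \<in> measurable lborel borel"
    by (rule meas_Tpair[OF assms(3), of x "\<lambda>_. 1", simplified density_1])
  have e: "(\<lambda>z. ennreal (\<psi> z)) \<in> borel_measurable borel" using assms(4) by measurable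
  have "(\<integral>\<^sup>+ z. ennreal (\<psi> z) \<partial>ipf_prop1 Ts r x) = (\<integral>\<^sup>+ y. ennreal (\<psi> (Ts x y, y)) \<partial>density lborel (\<lambda>y. ennreal (r y)))"
    unfolding ipf_prop1_def by (rule nn_integral_distr[OF m']) (use e in simp)
  also have "\<dots> = (\<integral>\<^sup>+ y. ennreal (r y) * ennreal (\<psi> (Ts x y, y)) \<partial>lborel)"
  proof (rule nn_integral_density)
    show "(\<lambda>y. ennreal (r y)) \<in> borel_measurable lborel" using assms(2) by measurable
    show "(\<lambda>y. ennreal (\<psi> (Ts x y, y))) \<in> borel_measurable lborel"
      using measurable_compose[OF m e] by simp
  qed
  also have "\<dots> = (\<integral>\<^sup>+ y. ennreal (\<psi> (Ts x y, y) * r y) \<partial>lborel)"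
    using assms(1,5) by (simp add: ennreal_mult' mult.commute)
  finally show ?thesis .
qed

lemma space_cloud: "space (cloud_space N) = (\<Pi>\<^sub>E i\<in>{..<N}. UNIV)"
  unfolding cloud_space_def by (simp add: space_PiM)

lemma space_cloud_ne: "space (cloud_space N) \<noteq> {}"
  unfolding cloud_space_def by simp

locale rho_setup =
  fixes T :: "nat \<Rightarrow> 'x::euclidean_space \<Rightarrow> 'y::euclidean_space \<Rightarrow> 'x"
    and \<rho> :: "'x \<Rightarrow> 'y \<Rightarrow> real"
  assumes rho_dens: "\<forall>x. (\<forall>y. 0 \<le> \<rho> x y) \<and> (\<integral>\<^sup>+ y. ennreal (\<rho> x y) \<partial>lborel) = 1"
    and rho_meas: "case_prod \<rho> \<in> borel_measurable borel"
    and T_meas: "\<forall>s. case_prod (T s) \<in> borel_measurable borel"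
begin

lemma rho_m: "\<rho> x \<in> borel_measurable borel" by (rule meas_slice[OF rho_meas])
lemma T_m: "case_prod (T s) \<in> borel_measurable borel" using T_meas by simp
lemma rho_nn: "0 \<le> \<rho> x y" using rho_dens by auto
lemma rho_1: "(\<integral>\<^sup>+ y. ennreal (\<rho> x y) \<partial>lborel) = 1" using rho_dens by auto

lemma Q_prob: "prob_space (ipf_prop1 (T s) (\<rho> x) z)"
  by (rule prob_Q[OF rho_1 rho_m T_m])
lemma Q_sets: "sets (ipf_prop1 (T s) (\<rho> x) z) = sets borel"
  unfolding ipf_prop1_def by simp
lemma Q_meas: "(\<lambda>z. ipf_prop1 (T s) (\<rho> x) z) \<in> measurable borel (subprob_algebra borel)"
  by (rule meas_Q[OF rho_1 rho_m T_m])

lemma P_sets: "sets (ipf_proposal N T \<rho> xs s c) = sets (cloud_space N)"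
  unfolding ipf_proposal_def cloud_space_def by (rule sets_PiM_cong) (auto simp: Q_sets)
lemma P_space: "space (ipf_proposal N T \<rho> xs s c) = space (cloud_space N)"
  using P_sets by (rule sets_eq_imp_space_eq)
lemma P_prob: "prob_space (ipf_proposal N T \<rho> xs s c)"
  unfolding ipf_proposal_def by (rule prob_space_PiM) (rule Q_prob)

lemma P_distr:
  fixes c :: "('x, 'y) cloud" and xs :: "nat \<Rightarrow> 'x" and s N :: nat
  defines "D \<equiv> density lborel (\<lambda>y. ennreal (\<rho> (xs s) y))"
  defines "G \<equiv> (\<lambda>(c :: ('x,'y) cloud) ys. \<lambda>i\<in>{..<N}. (T s (fst (c i)) (ys i), ys i))"
  shows "ipf_proposal N T \<rho> xs s c = distr (PiM {..<N} (\<lambda>_. D)) (cloud_space N) (G c)"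
    and "G c \<in> measurable (PiM {..<N} (\<lambda>_. D)) (cloud_space N)"
proof -
  let ?M = "\<lambda>i. ipf_prop1 (T s) (\<rho> (xs s)) (fst (c i))"
  have PM: "product_sigma_finite ?M"
    unfolding product_sigma_finite_def by (auto intro: prob_space_imp_sigma_finite Q_prob)
  have Dp: "prob_space D" unfolding D_def by (rule prob_dens[OF rho_1 rho_m])
  have PD: "product_sigma_finite (\<lambda>_::nat. D)"
    unfolding product_sigma_finite_def by (auto intro: prob_space_imp_sigma_finite Dp)
  have fm: "(\<lambda>y. (T s x y, y)) \<in> measurable D borel" for x
    unfolding D_def by (rule meas_Tpair[OF T_m])
  have Gm: "G c \<in> measurable (PiM {..<N} (\<lambda>_. D)) (cloud_space N)"
    unfolding G_def cloud_space_def
    apply (rule measurable_restrict)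
    subgoal for i
      using measurable_compose[OF measurable_component_singleton[of i "{..<N}" "\<lambda>_. D"] fm[of "fst (c i)"]]
      by simp
    done
  show "G c \<in> measurable (PiM {..<N} (\<lambda>_. D)) (cloud_space N)" by (rule Gm)
  show "ipf_proposal N T \<rho> xs s c = distr (PiM {..<N} (\<lambda>_. D)) (cloud_space N) (G c)" unfolding ipf_proposal_def
  proof (rule product_sigma_finite.PiM_eqI[OF PM, symmetric])
    show "finite {..<N}" by simp
    show "sets (distr (PiM {..<N} (\<lambda>_. D)) (cloud_space N) (G c)) = sets (PiM {..<N} ?M)"
      unfolding cloud_space_def sets_distr by (rule sets_PiM_cong) (auto simp: Q_sets)
    fix A assume A: "\<And>i. i \<in> {..<N} \<Longrightarrow> A i \<in> sets (?M i)"
    define B where "B i = (\<lambda>y. (T s (fst (c i)) y, y)) -` A i" for i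
    have AC: "Pi\<^sub>E {..<N} A \<in> sets (cloud_space N)"
      unfolding cloud_space_def using A by (intro sets_PiM_I_finite) (auto simp: Q_sets)
    have B: "B i \<in> sets D" if "i < N" for i
    proof -
      have "(\<lambda>y. (T s (fst (c i)) y, y)) -` A i \<inter> space D \<in> sets D"
        using measurable_sets[OF fm A[of i, unfolded Q_sets]] that by simp
      then show ?thesis unfolding B_def D_def by simp
    qed
    have pre: "G c -` Pi\<^sub>E {..<N} A \<inter> space (PiM {..<N} (\<lambda>_. D)) = Pi\<^sub>E {..<N} B"
      unfolding G_def B_def by (auto simp: space_PiM D_def PiE_def Pi_def extensional_def)
    have "emeasure (distr (PiM {..<N} (\<lambda>_. D)) (cloud_space N) (G c)) (Pi\<^sub>E {..<N} A)
        = emeasure (PiM {..<N} (\<lambda>_. D)) (Pi\<^sub>E {..<N} B)"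
      by (simp add: emeasure_distr[OF Gm AC] pre)
    also have "\<dots> = (\<Prod>i<N. emeasure D (B i))"
      using B by (subst product_sigma_finite.emeasure_PiM[OF PD]) auto
    also have "\<dots> = (\<Prod>i<N. emeasure (?M i) (A i))"
    proof (rule prod.cong)
      fix i assume i: "i \<in> {..<N}"
      have "emeasure (?M i) (A i) = emeasure D ((\<lambda>y. (T s (fst (c i)) y, y)) -` A i \<inter> space D)"
        unfolding ipf_prop1_def D_def[symmetric]
        using A[OF i] by (subst emeasure_distr[OF fm]) (auto simp: D_def Q_sets)
      then show "emeasure D (B i) = emeasure (?M i) (A i)" unfolding B_def D_def by simp
    qed simp
    finally show "emeasure (distr (PiM {..<N} (\<lambda>_. D)) (cloud_space N) (G c)) (Pi\<^sub>E {..<N} A)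
        = (\<Prod>i<N. emeasure (?M i) (A i))" by simp
  qed
qed


lemma fst_borel: "fst \<in> measurable (borel :: ('a::euclidean_space \<times> 'b::euclidean_space) measure) borel"
  by (metis borel_prod measurable_fst)

lemma P_meas:
  fixes xs :: "nat \<Rightarrow> 'x" and s N :: nat
  shows "(\<lambda>c. ipf_proposal N T \<rho> xs s c) \<in> measurable (cloud_space N) (subprob_algebra (cloud_space N))"
proof -
  define D where "D = density lborel (\<lambda>y. ennreal (\<rho> (xs s) y))"
  define G where "G = (\<lambda>(c :: ('x,'y) cloud) ys. \<lambda>i\<in>{..<N}. (T s (fst (c i)) (ys i), ys i))"
  define Y where "Y = PiM {..<N} (\<lambda>_::nat. D)"
  have eq: "ipf_proposal N T \<rho> xs s c = distr Y (cloud_space N) (G c)" for c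
    unfolding D_def G_def Y_def by (rule P_distr(1))
  have Dp: "prob_space D" unfolding D_def by (rule prob_dens[OF rho_1 rho_m])
  have Yp: "prob_space Y" unfolding Y_def by (rule prob_space_PiM) (rule Dp)
  have c: "(\<lambda>_. Y) \<in> measurable (cloud_space N) (subprob_algebra Y)"
    apply (rule measurable_const)
    using Yp by (auto simp: space_subprob_algebra prob_space_imp_subprob_space)
  define G' where "G' = (\<lambda>p :: ('x,'y) cloud \<times> (nat \<Rightarrow> 'y). \<lambda>i\<in>{..<N}. (T s (fst (fst p i)) (snd p i), snd p i))"
  have GG: "case_prod G = G'" unfolding G_def G'_def by (auto simp: fun_eq_iff)
  have f: "case_prod G \<in> measurable (cloud_space N \<Otimes>\<^sub>M Y) (cloud_space N)"
    unfolding GG G'_def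
    unfolding cloud_space_def[of N]
    apply (rule measurable_restrict)
    subgoal for i
    proof -
      assume i: "i \<in> {..<N}"
      have a: "(\<lambda>p::('x,'y) cloud \<times> (nat \<Rightarrow> 'y). fst (fst p i)) \<in> measurable (PiM {..<N} (\<lambda>_. borel) \<Otimes>\<^sub>M Y) borel"
        apply (rule measurable_compose[OF _ fst_borel])
        apply (rule measurable_compose[OF measurable_fst])
        using i by simp
      have b: "(\<lambda>p::('x,'y) cloud \<times> (nat \<Rightarrow> 'y). snd p i) \<in> measurable (PiM {..<N} (\<lambda>_. borel) \<Otimes>\<^sub>M Y) D"
        unfolding Y_def
        apply (rule measurable_compose[OF measurable_snd])
        using i by simp
      have ab: "(\<lambda>p::('x,'y) cloud \<times> (nat \<Rightarrow> 'y). (fst (fst p i), snd p i)) \<in> measurable (PiM {..<N} (\<lambda>_. borel) \<Otimes>\<^sub>M Y) (borel \<Otimes>\<^sub>M D)"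
        by (rule measurable_Pair[OF a b])
      from measurable_compose[OF ab meas_Tpair2[OF T_m[of s], of "\<lambda>y. ennreal (\<rho> (xs s) y)", folded D_def]]
      show ?thesis unfolding D_def by simp
    qed
    done
  show ?thesis
    unfolding eq by (rule measurable_distr2[OF f c])
qed

end

lemma meas_slice1:
  fixes f :: "'a::euclidean_space \<Rightarrow> 'b::euclidean_space \<Rightarrow> 'c::euclidean_space"
  assumes "case_prod f \<in> borel_measurable borel"
  shows "(\<lambda>x. f x y) \<in> borel_measurable borel"
proof -
  have "(\<lambda>x. (x, y)) \<in> measurable borel (borel :: ('a \<times> 'b) measure)"
    unfolding borel_prod[symmetric] by measurable
  from measurable_compose[OF this assms] show ?thesis by simp
qed

lemma fst_borel0: "fst \<in> measurable (borel :: ('a::euclidean_space \<times> 'b::euclidean_space) measure) borel"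
  by (metis borel_prod measurable_fst)

lemma comp_cloud[measurable]:
  "i < N \<Longrightarrow> (\<lambda>c. c i) \<in> measurable (cloud_space N) borel"
  unfolding cloud_space_def by simp

lemma accept_sets:
  fixes \<beta> :: "'x::euclidean_space \<Rightarrow> 'o::euclidean_space \<Rightarrow> real"
  assumes "case_prod \<beta> \<in> borel_measurable borel"
  shows "(ipf_accept_set N \<beta> a g :: ('x, 'y::euclidean_space) cloud set) \<in> sets (cloud_space N)"
proof -
  have b[measurable]: "(\<lambda>x. \<beta> x a) \<in> borel_measurable borel" by (rule meas_slice1[OF assms])
  have f[measurable]: "fst \<in> measurable (borel :: ('x \<times> 'y) measure) borel" by (rule fst_borel0)
  have "(\<lambda>c::('x,'y) cloud. (\<Sum>i<N. \<beta> (fst (c i)) a) / real N) \<in> borel_measurable (cloud_space N)"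
  proof -
    have "(\<lambda>c::('x,'y) cloud. \<beta> (fst (c i)) a) \<in> borel_measurable (cloud_space N)" if "i < N" for i
      using measurable_compose[OF measurable_compose[OF comp_cloud[OF that] f] b] by simp
    then show ?thesis by (intro borel_measurable_divide borel_measurable_sum) auto
  qed
  then show ?thesis unfolding ipf_accept_set_def by measurable
qed

lemma ennreal_self_div_le1: "(x::ennreal) \<noteq> top \<Longrightarrow> x / x \<le> 1"
  by (cases "x = 0") (auto simp: top.not_eq_extremum)

context rho_setup
begin

lemma U_sets: "sets (uniform_measure (ipf_proposal N T \<rho> xs s c) A) = sets (cloud_space N)"
  by (simp add: P_sets)

lemma U_meas:
  fixes A :: "('x,'y) cloud set"
  assumes A: "A \<in> sets (cloud_space N)"
  shows "(\<lambda>c. uniform_measure (ipf_proposal N T \<rho> xs s c) A) \<in> measurable (cloud_space N) (subprob_algebra (cloud_space N))"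
proof (rule measurable_subprob_algebra)
  fix c
  interpret P: prob_space "ipf_proposal N T \<rho> xs s c" by (rule P_prob)
  have AP: "A \<in> sets (ipf_proposal N T \<rho> xs s c)" using A by (simp add: P_sets)
  show "subprob_space (uniform_measure (ipf_proposal N T \<rho> xs s c) A)"
  proof
    show "space (uniform_measure (ipf_proposal N T \<rho> xs s c) A) \<noteq> {}"
      by (simp add: P_space space_cloud_ne)
    have "emeasure (uniform_measure (ipf_proposal N T \<rho> xs s c) A) (space (uniform_measure (ipf_proposal N T \<rho> xs s c) A))
        = emeasure (ipf_proposal N T \<rho> xs s c) A / emeasure (ipf_proposal N T \<rho> xs s c) A"
      using AP sets.sets_into_space[OF AP] by (simp add: Int_absorb2)
    also have "\<dots> \<le> 1" by (rule ennreal_self_div_le1) simp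
    finally show "emeasure (uniform_measure (ipf_proposal N T \<rho> xs s c) A) (space (uniform_measure (ipf_proposal N T \<rho> xs s c) A)) \<le> 1" .
  qed
  show "sets (uniform_measure (ipf_proposal N T \<rho> xs s c) A) = sets (cloud_space N)" by (rule U_sets)
next
  fix B :: "('x,'y) cloud set" assume B: "B \<in> sets (cloud_space N)"
  have e: "emeasure (uniform_measure (ipf_proposal N T \<rho> xs s c) A) B =
      emeasure (ipf_proposal N T \<rho> xs s c) (A \<inter> B) / emeasure (ipf_proposal N T \<rho> xs s c) A" for c
    using A B by (simp add: P_sets)
  have m1: "(\<lambda>c. emeasure (ipf_proposal N T \<rho> xs s c) X) \<in> borel_measurable (cloud_space N)"
    if "(X::('x,'y) cloud set) \<in> sets (cloud_space N)" for X
    using measurable_compose[OF P_meas measurable_emeasure_subprob_algebra[OF that]] .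
  show "(\<lambda>c. emeasure (uniform_measure (ipf_proposal N T \<rho> xs s c) A) B) \<in> borel_measurable (cloud_space N)"
    unfolding e using m1[of "A \<inter> B"] m1[OF A] A B
    by (intro borel_measurable_divide_ennreal) auto
qed

lemma K_meas:
  fixes A :: "('x,'y) cloud set"
  assumes A: "A \<in> sets (cloud_space N)"
  shows "(\<lambda>c. distr (uniform_measure (ipf_proposal N T \<rho> xs s c) A) (cloud_space N \<Otimes>\<^sub>M cloud_space N) (\<lambda>c'. (c, c')))
     \<in> measurable (cloud_space N) (subprob_algebra (cloud_space N \<Otimes>\<^sub>M cloud_space N))"
proof (rule measurable_distr2[OF _ U_meas[OF A]])
  show "(\<lambda>(c, c'). (c, c')) \<in> measurable (cloud_space N \<Otimes>\<^sub>M cloud_space N) (cloud_space N \<Otimes>\<^sub>M cloud_space N)"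
    by simp
qed

end

lemma meas_transfer: "sets M = sets N \<Longrightarrow> f \<in> measurable N K \<Longrightarrow> f \<in> measurable M K"
  using measurable_cong_sets[of M N K K] by simp

lemma pi0_sets:
  assumes "sets pi0x = sets (borel :: 'x::euclidean_space measure)"
  shows "sets (ipf_pi0 pi0x \<rho> xs) = sets (borel :: ('x \<times> 'y::euclidean_space) measure)"
proof -
  have "sets (ipf_pi0 pi0x \<rho> xs) = sets ((borel :: 'x measure) \<Otimes>\<^sub>M (borel :: 'y measure))"
    unfolding ipf_pi0_def by (rule sets_pair_measure_cong) (use assms in simp_all)
  then show ?thesis by (metis borel_prod)
qed

context rho_setup
begin

lemma U_subprob:
  fixes A :: "('x,'y) cloud set"
  assumes A: "A \<in> sets (cloud_space N)"
  shows "subprob_space (uniform_measure (ipf_proposal N T \<rho> xs s c) A)"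
proof
  interpret P: prob_space "ipf_proposal N T \<rho> xs s c" by (rule P_prob)
  have AP: "A \<in> sets (ipf_proposal N T \<rho> xs s c)" using A by (simp add: P_sets)
  show "space (uniform_measure (ipf_proposal N T \<rho> xs s c) A) \<noteq> {}"
    by (simp add: P_space space_cloud_ne)
  have "emeasure (uniform_measure (ipf_proposal N T \<rho> xs s c) A) (space (uniform_measure (ipf_proposal N T \<rho> xs s c) A))
      = emeasure (ipf_proposal N T \<rho> xs s c) A / emeasure (ipf_proposal N T \<rho> xs s c) A"
    using AP sets.sets_into_space[OF AP] by (simp add: Int_absorb2)
  also have "\<dots> \<le> 1" by (rule ennreal_self_div_le1) simp
  finally show "emeasure (uniform_measure (ipf_proposal N T \<rho> xs s c) A) (space (uniform_measure (ipf_proposal N T \<rho> xs s c) A)) \<le> 1" .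
qed

lemma law_sets:
  fixes pi0x :: "'x measure" and \<beta> :: "'x \<Rightarrow> 'o \<Rightarrow> real"
  assumes pi: "sets pi0x = sets borel"
  shows "sets (ipf_law pi0x N T \<rho> \<beta> xs as \<gamma> s) = sets (cloud_space N)"
proof (induction s)
  case 0
  show ?case unfolding ipf_law.simps cloud_space_def
    by (rule sets_PiM_cong) (simp_all add: pi0_sets[OF pi])
next
  case (Suc s)
  have ne: "space (ipf_law pi0x N T \<rho> \<beta> xs as \<gamma> s) \<noteq> {}"
    using sets_eq_imp_space_eq[OF Suc.IH] space_cloud_ne by simp
  show ?case unfolding ipf_law.simps
  proof (rule sets_bind[OF _ ne])
    fix c
    show "sets (ipf_accepted N T \<rho> \<beta> xs as \<gamma> (Suc s) c \<bind> ipf_resample N \<beta> (as (Suc s))) = sets (cloud_space N)"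
    proof (rule sets_bind)
      fix c'
      show "sets (ipf_resample N \<beta> (as (Suc s)) c') = sets (cloud_space N)"
        unfolding ipf_resample_def cloud_space_def by (rule sets_PiM_cong) simp_all
      show "space (ipf_accepted N T \<rho> \<beta> xs as \<gamma> (Suc s) c) \<noteq> {}"
        unfolding ipf_accepted_def by (simp add: P_space space_cloud_ne)
    qed
  qed
qed


lemma delta_eq:
  assumes phi: "\<phi> \<in> borel_measurable borel"
  shows "delta_T_rho T \<rho> xs s (\<lambda>z. \<bar>\<phi> z\<bar> ^ 4) z
    = (\<integral>\<^sup>+ w. ennreal (\<bar>\<phi> w\<bar> ^ 4) \<partial>ipf_prop1 (T s) (\<rho> (xs s)) (fst z))"
  unfolding delta_T_rho_def
  by (rule int_Q[symmetric]) (use rho_nn rho_m T_m phi in auto)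

lemma delta_meas:
  assumes phi: "\<phi> \<in> borel_measurable borel"
  shows "delta_T_rho T \<rho> xs s (\<lambda>z. \<bar>\<phi> z\<bar> ^ 4) \<in> borel_measurable borel"
proof -
  have e: "(\<lambda>w. ennreal (\<bar>\<phi> w\<bar> ^ 4)) \<in> borel_measurable borel" using phi by measurable
  have "(\<lambda>z::'x \<times> 'y. \<integral>\<^sup>+ w. ennreal (\<bar>\<phi> w\<bar> ^ 4) \<partial>ipf_prop1 (T s) (\<rho> (xs s)) (fst z)) \<in> borel_measurable borel"
    using measurable_compose[OF measurable_compose[OF fst_borel0 Q_meas] nn_integral_measurable_subprob_algebra[OF e]]
    by simp
  then show ?thesis by (subst (asm) delta_eq[OF phi, symmetric])
qed

lemma J_int:
  fixes pi0x :: "'x measure" and \<beta> :: "'x \<Rightarrow> 'o::euclidean_space \<Rightarrow> real"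
    and g :: "('x,'y) cloud \<times> ('x,'y) cloud \<Rightarrow> ennreal"
  assumes pi: "sets pi0x = sets borel" and bm: "case_prod \<beta> \<in> borel_measurable borel"
    and g: "g \<in> borel_measurable (cloud_space N \<Otimes>\<^sub>M cloud_space N)"
  shows "(\<integral>\<^sup>+ \<omega>. g \<omega> \<partial>ipf_joint pi0x N T \<rho> \<beta> xs as \<gamma> k) =
    (\<integral>\<^sup>+ c. (\<integral>\<^sup>+ c'. g (c, c') \<partial>uniform_measure (ipf_proposal N T \<rho> xs k c) (ipf_accept_set N \<beta> (as k) (\<gamma> k)))
       \<partial>ipf_law pi0x N T \<rho> \<beta> xs as \<gamma> (k - 1))"
proof -
  let ?A = "ipf_accept_set N \<beta> (as k) (\<gamma> k) :: ('x,'y) cloud set"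
  have A: "?A \<in> sets (cloud_space N)" by (rule accept_sets[OF bm])
  let ?L = "ipf_law pi0x N T \<rho> \<beta> xs as \<gamma> (k - 1)"
  have Ls: "sets ?L = sets (cloud_space N)" by (rule law_sets[OF pi])
  have Km: "(\<lambda>c. distr (uniform_measure (ipf_proposal N T \<rho> xs k c) ?A) (cloud_space N \<Otimes>\<^sub>M cloud_space N) (\<lambda>c'. (c, c')))
     \<in> measurable ?L (subprob_algebra (cloud_space N \<Otimes>\<^sub>M cloud_space N))"
    by (rule meas_transfer[OF Ls K_meas[OF A]])
  have "(\<integral>\<^sup>+ \<omega>. g \<omega> \<partial>ipf_joint pi0x N T \<rho> \<beta> xs as \<gamma> k) =
     (\<integral>\<^sup>+ c. (\<integral>\<^sup>+ \<omega>. g \<omega> \<partial>distr (uniform_measure (ipf_proposal N T \<rho> xs k c) ?A) (cloud_space N \<Otimes>\<^sub>M cloud_space N) (\<lambda>c'. (c, c'))) \<partial>?L)"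
    unfolding ipf_joint_def ipf_accepted_def by (rule nn_integral_bind[OF g Km])
  also have "\<dots> = (\<integral>\<^sup>+ c. (\<integral>\<^sup>+ c'. g (c, c') \<partial>uniform_measure (ipf_proposal N T \<rho> xs k c) ?A) \<partial>?L)"
  proof (rule nn_integral_cong)
    fix c assume c: "c \<in> space ?L"
    then have c': "c \<in> space (cloud_space N)" using sets_eq_imp_space_eq[OF Ls] by simp
    have m: "(\<lambda>c'. (c, c')) \<in> measurable (uniform_measure (ipf_proposal N T \<rho> xs k c) ?A) (cloud_space N \<Otimes>\<^sub>M cloud_space N)"
      apply (rule measurable_Pair)
       apply (rule measurable_const[OF c'])
      apply (rule measurable_ident_sets) by (rule U_sets)
    show "(\<integral>\<^sup>+ \<omega>. g \<omega> \<partial>distr (uniform_measure (ipf_proposal N T \<rho> xs k c) ?A) (cloud_space N \<Otimes>\<^sub>M cloud_space N) (\<lambda>c'. (c, c')))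
       = (\<integral>\<^sup>+ c'. g (c, c') \<partial>uniform_measure (ipf_proposal N T \<rho> xs k c) ?A)"
      by (rule nn_integral_distr[OF m]) (use g in simp)
  qed
  finally show ?thesis .
qed

lemma J_fst:
  fixes pi0x :: "'x measure" and \<beta> :: "'x \<Rightarrow> 'o::euclidean_space \<Rightarrow> real"
    and h :: "('x,'y) cloud \<Rightarrow> ennreal"
  assumes pi: "sets pi0x = sets borel" and bm: "case_prod \<beta> \<in> borel_measurable borel"
    and h: "h \<in> borel_measurable (cloud_space N)"
  shows "(\<integral>\<^sup>+ \<omega>. h (fst \<omega>) \<partial>ipf_joint pi0x N T \<rho> \<beta> xs as \<gamma> k) \<le> (\<integral>\<^sup>+ c. h c \<partial>ipf_law pi0x N T \<rho> \<beta> xs as \<gamma> (k - 1))"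
proof -
  let ?A = "ipf_accept_set N \<beta> (as k) (\<gamma> k) :: ('x,'y) cloud set"
  have A: "?A \<in> sets (cloud_space N)" by (rule accept_sets[OF bm])
  have g: "(\<lambda>\<omega>. h (fst \<omega>)) \<in> borel_measurable (cloud_space N \<Otimes>\<^sub>M cloud_space N)"
    by (rule measurable_compose[OF measurable_fst h])
  show ?thesis unfolding J_int[OF pi bm g]
  proof (rule nn_integral_mono)
    fix c
    interpret U: subprob_space "uniform_measure (ipf_proposal N T \<rho> xs k c) ?A" by (rule U_subprob[OF A])
    have "(\<integral>\<^sup>+ c'. h (fst (c, c')) \<partial>uniform_measure (ipf_proposal N T \<rho> xs k c) ?A)
       = h c * emeasure (uniform_measure (ipf_proposal N T \<rho> xs k c) ?A) (space (uniform_measure (ipf_proposal N T \<rho> xs k c) ?A))"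
      by simp
    also have "\<dots> \<le> h c * 1" by (intro mult_left_mono U.emeasure_space_le_1) simp
    finally show "(\<integral>\<^sup>+ c'. h (fst (c, c')) \<partial>uniform_measure (ipf_proposal N T \<rho> xs k c) ?A) \<le> h c" by simp
  qed
qed

end

context rho_setup
begin

lemma P_comp:
  assumes phi: "\<phi> \<in> borel_measurable borel" and i: "i < N"
  shows "(\<integral>\<^sup>+ c'. ennreal (\<bar>\<phi> (c' i)\<bar> ^ 4) \<partial>ipf_proposal N T \<rho> xs s c)
       = delta_T_rho T \<rho> xs s (\<lambda>z. \<bar>\<phi> z\<bar> ^ 4) (c i)"
proof -
  let ?M = "\<lambda>j. ipf_prop1 (T s) (\<rho> (xs s)) (fst (c j))"
  have e: "(\<lambda>w. ennreal (\<bar>\<phi> w\<bar> ^ 4)) \<in> borel_measurable (?M i)"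
    using phi unfolding measurable_cong_sets[OF Q_sets refl] by measurable
  have d: "distr (PiM {..<N} ?M) (?M i) (\<lambda>\<omega>. \<omega> i) = ?M i"
    by (rule distr_PiM_component) (use i Q_prob in auto)
  have m: "(\<lambda>\<omega>. \<omega> i) \<in> measurable (PiM {..<N} ?M) (?M i)"
    by (rule measurable_component_singleton) (use i in simp)
  have "(\<integral>\<^sup>+ c'. ennreal (\<bar>\<phi> (c' i)\<bar> ^ 4) \<partial>PiM {..<N} ?M) = (\<integral>\<^sup>+ w. ennreal (\<bar>\<phi> w\<bar> ^ 4) \<partial>distr (PiM {..<N} ?M) (?M i) (\<lambda>\<omega>. \<omega> i))"
    by (rule nn_integral_distr[OF m, symmetric]) (use e in simp)
  also have "\<dots> = (\<integral>\<^sup>+ w. ennreal (\<bar>\<phi> w\<bar> ^ 4) \<partial>?M i)" by (simp only: d)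
  finally show ?thesis unfolding ipf_proposal_def delta_eq[OF phi] .
qed

lemma J_sum:
  fixes pi0x :: "'x measure" and \<beta> :: "'x \<Rightarrow> 'o::euclidean_space \<Rightarrow> real"
  assumes pi: "sets pi0x = sets borel" and bm: "case_prod \<beta> \<in> borel_measurable borel"
    and phi: "\<phi> \<in> borel_measurable borel" and eps: "\<epsilon> < 1"
    and fail: "AE c in ipf_law pi0x N T \<rho> \<beta> xs as \<gamma> (k - 1). measure (ipf_proposal N T \<rho> xs k c)
                     (space (cloud_space N) - ipf_accept_set N \<beta> (as k) (\<gamma> k)) \<le> \<epsilon>"
  shows "(\<integral>\<^sup>+ \<omega>. (\<Sum>i<N. ennreal (\<bar>\<phi> (snd \<omega> i)\<bar> ^ 4)) \<partial>ipf_joint pi0x N T \<rho> \<beta> xs as \<gamma> k)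
     \<le> ennreal (1 / (1 - \<epsilon>)) * (\<integral>\<^sup>+ c. (\<Sum>i<N. delta_T_rho T \<rho> xs k (\<lambda>z. \<bar>\<phi> z\<bar> ^ 4) (c i)) \<partial>ipf_law pi0x N T \<rho> \<beta> xs as \<gamma> (k - 1))"
proof -
  let ?A = "ipf_accept_set N \<beta> (as k) (\<gamma> k) :: ('x,'y) cloud set"
  let ?L = "ipf_law pi0x N T \<rho> \<beta> xs as \<gamma> (k - 1)"
  let ?\<delta> = "delta_T_rho T \<rho> xs k (\<lambda>z. \<bar>\<phi> z\<bar> ^ 4)"
  have A: "?A \<in> sets (cloud_space N)" by (rule accept_sets[OF bm])
  have Ls: "sets ?L = sets (cloud_space N)" by (rule law_sets[OF pi])
  have f_meas: "(\<lambda>c'::('x,'y) cloud. \<Sum>i<N. ennreal (\<bar>\<phi> (c' i)\<bar> ^ 4)) \<in> borel_measurable (cloud_space N)"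
  proof -
    have "(\<lambda>c'::('x,'y) cloud. ennreal (\<bar>\<phi> (c' i)\<bar> ^ 4)) \<in> borel_measurable (cloud_space N)" if "i < N" for i
    proof -
      have "(\<lambda>w. ennreal (\<bar>\<phi> w\<bar> ^ 4)) \<in> borel_measurable borel" using phi by measurable
      from measurable_compose[OF comp_cloud[OF that] this] show ?thesis .
    qed
    then show ?thesis by (intro borel_measurable_sum) auto
  qed
  have g: "(\<lambda>\<omega>::('x,'y) cloud \<times> ('x,'y) cloud. \<Sum>i<N. ennreal (\<bar>\<phi> (snd \<omega> i)\<bar> ^ 4)) \<in> borel_measurable (cloud_space N \<Otimes>\<^sub>M cloud_space N)"
    using measurable_compose[OF measurable_snd f_meas] by simp
  have d_meas: "(\<lambda>c::('x,'y) cloud. \<Sum>i<N. ?\<delta> (c i)) \<in> borel_measurable (cloud_space N)"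
  proof -
    have "(\<lambda>c::('x,'y) cloud. ?\<delta> (c i)) \<in> borel_measurable (cloud_space N)" if "i < N" for i
      using measurable_compose[OF comp_cloud[OF that] delta_meas[OF phi]] .
    then show ?thesis by (intro borel_measurable_sum) auto
  qed
  have inner: "(\<integral>\<^sup>+ c'. (\<Sum>i<N. ennreal (\<bar>\<phi> (snd (c, c') i)\<bar> ^ 4)) \<partial>uniform_measure (ipf_proposal N T \<rho> xs k c) ?A)
      \<le> ennreal (1 / (1 - \<epsilon>)) * (\<Sum>i<N. ?\<delta> (c i))"
    if c: "measure (ipf_proposal N T \<rho> xs k c) (space (cloud_space N) - ?A) \<le> \<epsilon>" for c
  proof -
    let ?P = "ipf_proposal N T \<rho> xs k c"
    interpret P: prob_space ?P by (rule P_prob)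
    have AP: "?A \<in> sets ?P" using A by (simp add: P_sets)
    have fP: "(\<lambda>c'::('x,'y) cloud. \<Sum>i<N. ennreal (\<bar>\<phi> (c' i)\<bar> ^ 4)) \<in> borel_measurable ?P"
      by (rule meas_transfer[OF P_sets f_meas])
    have "P.prob (space ?P - ?A) = 1 - P.prob ?A" by (rule P.prob_compl[OF AP])
    with c have "1 - \<epsilon> \<le> P.prob ?A" by (simp add: P_space)
    then have low: "ennreal (1 - \<epsilon>) \<le> emeasure ?P ?A"
      by (simp add: P.emeasure_eq_measure ennreal_leI)
    have pos: "0 < ennreal (1 - \<epsilon>)" using eps by simp
    have "(\<integral>\<^sup>+ c'. (\<Sum>i<N. ennreal (\<bar>\<phi> (snd (c, c') i)\<bar> ^ 4)) \<partial>uniform_measure ?P ?A)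
        = (\<integral>\<^sup>+ c'. (\<Sum>i<N. ennreal (\<bar>\<phi> (c' i)\<bar> ^ 4)) * indicator ?A c' \<partial>?P) / emeasure ?P ?A"
      unfolding snd_conv by (rule nn_integral_uniform_measure[OF fP AP])
    also have "\<dots> \<le> (\<integral>\<^sup>+ c'. (\<Sum>i<N. ennreal (\<bar>\<phi> (c' i)\<bar> ^ 4)) \<partial>?P) / emeasure ?P ?A"
      by (intro divide_right_mono_ennreal nn_integral_mono) (auto simp: indicator_def)
    also have "(\<integral>\<^sup>+ c'. (\<Sum>i<N. ennreal (\<bar>\<phi> (c' i)\<bar> ^ 4)) \<partial>?P) = (\<Sum>i<N. ?\<delta> (c i))"
    proof -
      have "(\<integral>\<^sup>+ c'. (\<Sum>i<N. ennreal (\<bar>\<phi> (c' i)\<bar> ^ 4)) \<partial>?P) = (\<Sum>i<N. \<integral>\<^sup>+ c'. ennreal (\<bar>\<phi> (c' i)\<bar> ^ 4) \<partial>?P)"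
      proof (rule nn_integral_sum)
        fix i assume "i \<in> {..<N}"
        then have "(\<lambda>c'::('x,'y) cloud. ennreal (\<bar>\<phi> (c' i)\<bar> ^ 4)) \<in> borel_measurable (cloud_space N)"
          using measurable_compose[OF comp_cloud] phi by (simp add: measurable_compose[OF comp_cloud] )
        then show "(\<lambda>c'::('x,'y) cloud. ennreal (\<bar>\<phi> (c' i)\<bar> ^ 4)) \<in> borel_measurable ?P"
          by (rule meas_transfer[OF P_sets])
      qed
      also have "\<dots> = (\<Sum>i<N. ?\<delta> (c i))"
        by (rule sum.cong[OF refl], rule P_comp[OF phi], simp)
      finally show ?thesis .
    qed
    also have "(\<Sum>i<N. ?\<delta> (c i)) / emeasure ?P ?A \<le> ennreal (1 / (1 - \<epsilon>)) * (\<Sum>i<N. ?\<delta> (c i))"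
    proof (rule divide_le_posI_ennreal)
      show "0 < emeasure ?P ?A" using pos low by (rule less_le_trans)
      have "ennreal (1 - \<epsilon>) * ennreal (1 / (1 - \<epsilon>)) = 1"
        using eps by (simp add: ennreal_mult[symmetric])
      then have "1 \<le> emeasure ?P ?A * ennreal (1 / (1 - \<epsilon>))"
        by (metis low mult_right_mono zero_le)
      then have "1 * (\<Sum>i<N. ?\<delta> (c i)) \<le> (emeasure ?P ?A * ennreal (1 / (1 - \<epsilon>))) * (\<Sum>i<N. ?\<delta> (c i))"
        by (rule mult_right_mono) simp
      then show "(\<Sum>i<N. ?\<delta> (c i)) \<le> emeasure ?P ?A * (ennreal (1 / (1 - \<epsilon>)) * (\<Sum>i<N. ?\<delta> (c i)))"
        by (simp add: mult.assoc)
    qed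
    finally show ?thesis .
  qed
  have "(\<integral>\<^sup>+ \<omega>. (\<Sum>i<N. ennreal (\<bar>\<phi> (snd \<omega> i)\<bar> ^ 4)) \<partial>ipf_joint pi0x N T \<rho> \<beta> xs as \<gamma> k)
      = (\<integral>\<^sup>+ c. (\<integral>\<^sup>+ c'. (\<Sum>i<N. ennreal (\<bar>\<phi> (snd (c, c') i)\<bar> ^ 4)) \<partial>uniform_measure (ipf_proposal N T \<rho> xs k c) ?A) \<partial>?L)"
    by (rule J_int[OF pi bm g])
  also have "\<dots> \<le> (\<integral>\<^sup>+ c. ennreal (1 / (1 - \<epsilon>)) * (\<Sum>i<N. ?\<delta> (c i)) \<partial>?L)"
    by (rule nn_integral_mono_AE) (use fail inner in auto)
  also have "\<dots> = ennreal (1 / (1 - \<epsilon>)) * (\<integral>\<^sup>+ c. (\<Sum>i<N. ?\<delta> (c i)) \<partial>?L)"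
    by (rule nn_integral_cmult) (rule meas_transfer[OF Ls d_meas])
  finally show ?thesis .
qed

end

lemma cond_exp_abs_int:
  assumes sf: "sigma_finite_subalgebra M F" and f: "f \<in> borel_measurable M"
  shows "(\<integral>\<^sup>+ x. ennreal \<bar>real_cond_exp M F f x\<bar> \<partial>M) \<le> (\<integral>\<^sup>+ x. ennreal \<bar>f x\<bar> \<partial>M)"
proof -
  interpret sigma_finite_subalgebra M F by (rule sf)
  have fa: "(\<lambda>x. ennreal \<bar>f x\<bar>) \<in> borel_measurable M" using f by measurable
  have "(\<integral>\<^sup>+ x. ennreal \<bar>real_cond_exp M F f x\<bar> \<partial>M) \<le> (\<integral>\<^sup>+ x. nn_cond_exp M F (\<lambda>x. ennreal \<bar>f x\<bar>) x \<partial>M)"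
    by (rule nn_integral_mono_AE) (use real_cond_exp_abs[OF f] in auto)
  also have "\<dots> = (\<integral>\<^sup>+ x. 1 * nn_cond_exp M F (\<lambda>x. ennreal \<bar>f x\<bar>) x \<partial>M)" by simp
  also have "\<dots> = (\<integral>\<^sup>+ x. 1 * ennreal \<bar>f x\<bar> \<partial>M)"
    by (rule nn_cond_exp_intg) (use fa in simp_all)
  finally show ?thesis by simp
qed

lemma L_a: "(\<And>i. 0 \<le> x i) \<Longrightarrow> ennreal ((\<Sum>i<N. x i) / real N) = ennreal (1/real N) * (\<Sum>i<N. ennreal (x i))"
proof -
  assume x: "\<And>i. 0 \<le> x i"
  have "ennreal ((\<Sum>i<N. x i) / real N) = ennreal (1/real N * (\<Sum>i<N. x i))" by simp
  also have "\<dots> = ennreal (1/real N) * ennreal (\<Sum>i<N. x i)" by (rule ennreal_mult) (simp_all add: sum_nonneg x)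
  also have "ennreal (\<Sum>i<N. x i) = (\<Sum>i<N. ennreal (x i))" using x by simp
  finally show ?thesis .
qed

lemma L_b: "ennreal \<bar>(\<Sum>i<N. y i) / real N\<bar> \<le> ennreal (1/real N) * (\<Sum>i<N. ennreal \<bar>y i\<bar>)"
proof -
  have "\<bar>(\<Sum>i<N. y i) / real N\<bar> \<le> (\<Sum>i<N. \<bar>y i\<bar>) / real N"
    by (simp add: divide_right_mono sum_abs)
  then have "ennreal \<bar>(\<Sum>i<N. y i) / real N\<bar> \<le> ennreal ((\<Sum>i<N. \<bar>y i\<bar>) / real N)"
    by (rule ennreal_leI)
  also have "\<dots> = ennreal (1/real N) * (\<Sum>i<N. ennreal \<bar>y i\<bar>)" by (rule L_a) simp
  finally show ?thesis .
qed

lemma L_c: "ennreal \<bar>a - b\<bar> \<le> ennreal \<bar>a\<bar> + ennreal \<bar>b::real\<bar>"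
proof -
  have "ennreal \<bar>a - b\<bar> \<le> ennreal (\<bar>a\<bar> + \<bar>b\<bar>)" by (rule ennreal_leI) simp
  then show ?thesis by (simp add: ennreal_plus)
qed

lemma L_d: "1 \<le> N \<Longrightarrow> x / (of_nat N :: ennreal) = ennreal (1/real N) * x"
  by (simp add: divide_ennreal_def ennreal_of_nat_eq_real_of_nat inverse_ennreal mult.commute inverse_eq_divide)

lemma L_e: "ennreal (enn2real x) \<le> x"
  by (cases x) simp_all

context rho_setup
begin

lemma J_sets:
  fixes pi0x :: "'x measure" and \<beta> :: "'x \<Rightarrow> 'o::euclidean_space \<Rightarrow> real"
  assumes pi: "sets pi0x = sets borel"
  shows "sets (ipf_joint pi0x N T \<rho> \<beta> xs as \<gamma> k) = sets (cloud_space N \<Otimes>\<^sub>M cloud_space N)"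
proof -
  have "space (ipf_law pi0x N T \<rho> \<beta> xs as \<gamma> (k - 1)) = space (cloud_space N)"
    by (rule sets_eq_imp_space_eq[OF law_sets[OF pi]])
  then have ne: "space (ipf_law pi0x N T \<rho> \<beta> xs as \<gamma> (k - 1)) \<noteq> {}"
    using space_cloud_ne[of N] by simp
  show ?thesis unfolding ipf_joint_def by (rule sets_bind[OF _ ne]) simp
qed

lemma J_sigma:
  fixes pi0x :: "'x measure" and \<beta> :: "'x \<Rightarrow> 'o::euclidean_space \<Rightarrow> real"
  assumes pi: "sets pi0x = sets borel" and bm: "case_prod \<beta> \<in> borel_measurable borel"
    and Lp: "prob_space (ipf_law pi0x N T \<rho> \<beta> xs as \<gamma> (k - 1))"
  shows "sigma_finite_subalgebra (ipf_joint pi0x N T \<rho> \<beta> xs as \<gamma> k) (ipf_F N (ipf_joint pi0x N T \<rho> \<beta> xs as \<gamma> k))"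
proof -
  let ?A = "ipf_accept_set N \<beta> (as k) (\<gamma> k) :: ('x,'y) cloud set"
  let ?L = "ipf_law pi0x N T \<rho> \<beta> xs as \<gamma> (k - 1)"
  let ?J = "ipf_joint pi0x N T \<rho> \<beta> xs as \<gamma> k"
  have A: "?A \<in> sets (cloud_space N)" by (rule accept_sets[OF bm])
  have Ls: "sets ?L = sets (cloud_space N)" by (rule law_sets[OF pi])
  have Km: "(\<lambda>c. distr (uniform_measure (ipf_proposal N T \<rho> xs k c) ?A) (cloud_space N \<Otimes>\<^sub>M cloud_space N) (\<lambda>c'. (c, c')))
     \<in> measurable ?L (subprob_algebra (cloud_space N \<Otimes>\<^sub>M cloud_space N))"
    by (rule meas_transfer[OF Ls K_meas[OF A]])
  have "subprob_space ?J" unfolding ipf_joint_def ipf_accepted_def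
    by (rule subprob_space_bind[OF prob_space_imp_subprob_space[OF Lp] Km])
  then have fm: "finite_measure ?J" by (simp add: subprob_space_def)
  have Js: "sets ?J = sets (cloud_space N \<Otimes>\<^sub>M cloud_space N)" by (rule J_sets[OF pi])
  have fstm: "fst \<in> measurable ?J (cloud_space N)" by (rule meas_transfer[OF Js measurable_fst])
  have sub: "subalgebra ?J (ipf_F N ?J)"
    unfolding subalgebra_def ipf_F_def
  proof
    show "sets (vimage_algebra (space ?J) fst (cloud_space N)) \<subseteq> sets ?J"
      using measurable_sets[OF fstm] measurable_space[OF fstm]
      by (subst sets_vimage_algebra2) auto
    show "space (vimage_algebra (space ?J) fst (cloud_space N)) = space ?J" by simp
  qed
  have "finite_measure_subalgebra ?J (ipf_F N ?J)"
    unfolding finite_measure_subalgebra_def finite_measure_subalgebra_axioms_def using fm sub by simp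
  then show ?thesis by (rule finite_measure_subalgebra_is_sigma_finite)
qed

lemma opt_sets:
  fixes pi0x :: "'x measure" and \<beta> :: "'x \<Rightarrow> 'o \<Rightarrow> real"
  assumes pi: "sets pi0x = sets borel"
  shows "sets (opt_filter pi0x T \<rho> \<beta> xs as s) = sets borel"
proof (induction s)
  case 0
  then show ?case by (simp add: pi0_sets[OF pi])
next
  case (Suc s)
  have ne: "space (opt_filter pi0x T \<rho> \<beta> xs as s) \<noteq> {}"
    using sets_eq_imp_space_eq[OF Suc.IH] by simp
  show ?case unfolding opt_filter.simps opt_upd_def opt_pred_def sets_density
    by (rule sets_bind[OF _ ne]) (simp add: Q_sets)
qed

lemma opt_pred_int:
  fixes \<mu> :: "('x \<times> 'y) measure"
  assumes mu: "sets \<mu> = sets borel" and phi: "\<phi> \<in> borel_measurable borel"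
  shows "(\<integral>\<^sup>+ z. ennreal (\<bar>\<phi> z\<bar> ^ 4) \<partial>opt_pred T \<rho> xs s \<mu>) = (\<integral>\<^sup>+ z. delta_T_rho T \<rho> xs s (\<lambda>z. \<bar>\<phi> z\<bar> ^ 4) z \<partial>\<mu>)"
proof -
  have e: "(\<lambda>w. ennreal (\<bar>\<phi> w\<bar> ^ 4)) \<in> borel_measurable borel" using phi by measurable
  have km: "(\<lambda>z. ipf_prop1 (T s) (\<rho> (xs s)) (fst z)) \<in> measurable \<mu> (subprob_algebra borel)"
    by (rule meas_transfer[OF mu measurable_compose[OF fst_borel0 Q_meas]])
  show ?thesis unfolding opt_pred_def nn_integral_bind[OF e km]
    by (rule nn_integral_cong) (simp only: delta_eq[OF phi])
qed

end

theorem lemma7: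
  fixes pi0x :: "'x::euclidean_space measure"
    and \<rho> :: "'x \<Rightarrow> 'y::euclidean_space \<Rightarrow> real"
    and \<beta> :: "'x \<Rightarrow> 'o::euclidean_space \<Rightarrow> real"
    and T :: "nat \<Rightarrow> 'x \<Rightarrow> 'y \<Rightarrow> 'x"
    and xs :: "nat \<Rightarrow> 'x" and as :: "nat \<Rightarrow> 'o" and \<gamma> :: "nat \<Rightarrow> real"
    and N k :: nat
    and \<phi> :: "'x \<times> 'y \<Rightarrow> real"
    and M \<epsilon> :: real
  defines "J \<equiv> ipf_joint pi0x N T \<rho> \<beta> xs as \<gamma> k"
      and "L \<equiv> ipf_law pi0x N T \<rho> \<beta> xs as \<gamma> (k - 1)"
      and "F \<equiv> ipf_F N (ipf_joint pi0x N T \<rho> \<beta> xs as \<gamma> k)"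
      and "nphi \<equiv> norm4_pow4 pi0x T \<rho> \<beta> xs as \<phi> (k - 1)"
      and "\<delta> \<equiv> delta_T_rho T \<rho> xs k (\<lambda>z. \<bar>\<phi> z\<bar> ^ 4)"
  assumes k: "1 \<le> k" and N: "1 \<le> N"
    and pi0x: "prob_space pi0x" "sets pi0x = sets borel"
    and rho_dens: "\<forall>x. (\<forall>y. 0 \<le> \<rho> x y) \<and> (\<integral>\<^sup>+ y. ennreal (\<rho> x y) \<partial>lborel) = 1"
    and rho_meas: "case_prod \<rho> \<in> borel_measurable borel"
    and beta_dens: "\<forall>x. (\<forall>a. 0 \<le> \<beta> x a) \<and> (\<integral>\<^sup>+ a. ennreal (\<beta> x a) \<partial>lborel) = 1"
    and beta_meas: "case_prod \<beta> \<in> borel_measurable borel"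
    and T_meas: "\<forall>s. case_prod (T s) \<in> borel_measurable borel"
    and gamma_pos: "\<forall>s. 0 < \<gamma> s"
    and well_defined: "prob_space L"
    and phi_meas: "\<phi> \<in> borel_measurable borel"
    and a_bounded: "bdd_above (range (\<lambda>y. \<bar>\<rho> (xs k) y\<bar>))"
    and M_nonneg: "0 \<le> M"
    and b1: "(\<integral>\<^sup>+ c. (\<Sum>i<N. \<delta> (c i)) / of_nat N \<partial>L)
               \<le> ennreal M * ennreal (supnorm (\<rho> (xs k))) * nphi"
    and b2: "(\<integral>\<^sup>+ z. \<delta> z \<partial>opt_filter pi0x T \<rho> \<beta> xs as (k - 1))
               \<le> ennreal (supnorm (\<rho> (xs k))) * nphi"
    and eps: "\<epsilon> < 1"
    and c_fail: "AE c in L. measure (ipf_proposal N T \<rho> xs k c)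
                     (space (cloud_space N) - ipf_accept_set N \<beta> (as k) (\<gamma> k)) \<le> \<epsilon>"
  shows
    "((\<integral>\<^sup>+ \<omega>. ennreal \<bar>(\<Sum>i<N. \<bar>\<phi> (snd \<omega> i)\<bar> ^ 4) / real N
          - (\<Sum>i<N. real_cond_exp J F (\<lambda>\<omega>'. \<bar>\<phi> (snd \<omega>' i)\<bar> ^ 4) \<omega>) / real N\<bar> \<partial>J)
       \<le> ennreal (2 / (1 - \<epsilon>)) * ennreal M * ennreal (supnorm (\<rho> (xs k))) * nphi) \<and>
     ((\<integral>\<^sup>+ \<omega>. ennreal \<bar>(\<Sum>i<N. real_cond_exp J F (\<lambda>\<omega>'. \<bar>\<phi> (snd \<omega>' i)\<bar> ^ 4) \<omega>) / real N
          - enn2real ((\<Sum>i<N. \<delta> (fst \<omega> i)) / of_nat N)\<bar> \<partial>J)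
       \<le> ennreal ((2 - \<epsilon>) / (1 - \<epsilon>)) * ennreal M * ennreal (supnorm (\<rho> (xs k))) * nphi) \<and>
     ((\<integral>\<^sup>+ c. ennreal \<bar>enn2real ((\<Sum>i<N. \<delta> (c i)) / of_nat N)
          - enn2real (\<integral>\<^sup>+ z. ennreal (\<bar>\<phi> z\<bar> ^ 4)
               \<partial>opt_pred T \<rho> xs k (opt_filter pi0x T \<rho> \<beta> xs as (k - 1)))\<bar> \<partial>L)
       \<le> ennreal (supnorm (\<rho> (xs k))) * ennreal (M + 1) * nphi)"
proof -
  interpret R: rho_setup T \<rho> by unfold_locales (use rho_dens rho_meas T_meas in auto)
  note pi = pi0x(2)
  let ?A = "ipf_accept_set N \<beta> (as k) (\<gamma> k) :: ('x,'y) cloud set"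
  let ?C = "cloud_space N :: ('x,'y) cloud measure"
  let ?s = "ennreal (supnorm (\<rho> (xs k)))"
  have Ls: "sets L = sets ?C" unfolding L_def by (rule R.law_sets[OF pi])
  have Js: "sets J = sets (?C \<Otimes>\<^sub>M ?C)" unfolding J_def by (rule R.J_sets[OF pi])
  have sf: "sigma_finite_subalgebra J F" unfolding J_def F_def
    by (rule R.J_sigma[OF pi beta_meas]) (use well_defined L_def in simp)
  interpret L: prob_space L by (rule well_defined)
  have Np: "0 < real N" using N by simp
  have dm: "\<delta> \<in> borel_measurable borel" unfolding \<delta>_def by (rule R.delta_meas[OF phi_meas])
  have dsum_m: "(\<lambda>c::('x,'y) cloud. \<Sum>i<N. \<delta> (c i)) \<in> borel_measurable ?C"
  proof -
    have "(\<lambda>c::('x,'y) cloud. \<delta> (c i)) \<in> borel_measurable ?C" if "i < N" for i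
      using measurable_compose[OF comp_cloud[OF that] dm] .
    then show ?thesis by (intro borel_measurable_sum) auto
  qed
  have gm: "(\<lambda>\<omega>::('x,'y) cloud \<times> ('x,'y) cloud. \<bar>\<phi> (snd \<omega> i)\<bar> ^ 4) \<in> borel_measurable J" if "i < N" for i
  proof -
    have "(\<lambda>c::('x,'y) cloud. \<bar>\<phi> (c i)\<bar> ^ 4) \<in> borel_measurable ?C"
      using measurable_compose[OF comp_cloud[OF that] phi_meas] by measurable
    from measurable_compose[OF measurable_snd this] show ?thesis
      by (rule meas_transfer[OF Js])
  qed
  have gem: "(\<lambda>\<omega>::('x,'y) cloud \<times> ('x,'y) cloud. ennreal (\<bar>\<phi> (snd \<omega> i)\<bar> ^ 4)) \<in> borel_measurable J" if "i < N" for i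
    using gm[OF that] by measurable
  have Gm: "(\<lambda>\<omega>::('x,'y) cloud \<times> ('x,'y) cloud. \<Sum>i<N. ennreal (\<bar>\<phi> (snd \<omega> i)\<bar> ^ 4)) \<in> borel_measurable J"
    by (intro borel_measurable_sum) (use gem in auto)
  have rm: "(\<lambda>\<omega>. ennreal \<bar>real_cond_exp J F (\<lambda>\<omega>'. \<bar>\<phi> (snd \<omega>' i)\<bar> ^ 4) \<omega>\<bar>) \<in> borel_measurable J" for i
    by measurable
  have Rm: "(\<lambda>\<omega>. \<Sum>i<N. ennreal \<bar>real_cond_exp J F (\<lambda>\<omega>'. \<bar>\<phi> (snd \<omega>' i)\<bar> ^ 4) \<omega>\<bar>) \<in> borel_measurable J"
    by (intro borel_measurable_sum) (use rm in auto)
  have Dfm: "(\<lambda>\<omega>::('x,'y) cloud \<times> ('x,'y) cloud. \<Sum>i<N. \<delta> (fst \<omega> i)) \<in> borel_measurable J"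
    using measurable_compose[OF measurable_fst dsum_m] by (rule meas_transfer[OF Js])
  define E where "E = (\<integral>\<^sup>+ c. (\<Sum>i<N. \<delta> (c i)) \<partial>L)"
  define B where "B = (\<integral>\<^sup>+ c. (\<Sum>i<N. \<delta> (c i)) / of_nat N \<partial>L)"
  have B_eq: "B = ennreal (1 / real N) * E"
    unfolding B_def E_def L_d[OF N]
    by (rule nn_integral_cmult) (rule meas_transfer[OF Ls dsum_m])
  have B_le: "B \<le> ennreal M * ?s * nphi" unfolding B_def by (rule b1)
  have G_le: "(\<integral>\<^sup>+ \<omega>. (\<Sum>i<N. ennreal (\<bar>\<phi> (snd \<omega> i)\<bar> ^ 4)) \<partial>J) \<le> ennreal (1 / (1 - \<epsilon>)) * E"
    unfolding J_def E_def L_def \<delta>_def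
    by (rule R.J_sum[OF pi beta_meas phi_meas eps]) (use c_fail in \<open>simp only: L_def\<close>)
  have R_le: "(\<integral>\<^sup>+ \<omega>. (\<Sum>i<N. ennreal \<bar>real_cond_exp J F (\<lambda>\<omega>'. \<bar>\<phi> (snd \<omega>' i)\<bar> ^ 4) \<omega>\<bar>) \<partial>J)
      \<le> (\<integral>\<^sup>+ \<omega>. (\<Sum>i<N. ennreal (\<bar>\<phi> (snd \<omega> i)\<bar> ^ 4)) \<partial>J)"
  proof -
    have "(\<integral>\<^sup>+ \<omega>. (\<Sum>i<N. ennreal \<bar>real_cond_exp J F (\<lambda>\<omega>'. \<bar>\<phi> (snd \<omega>' i)\<bar> ^ 4) \<omega>\<bar>) \<partial>J)
        = (\<Sum>i<N. \<integral>\<^sup>+ \<omega>. ennreal \<bar>real_cond_exp J F (\<lambda>\<omega>'. \<bar>\<phi> (snd \<omega>' i)\<bar> ^ 4) \<omega>\<bar> \<partial>J)"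
      by (rule nn_integral_sum) (use rm in auto)
    also have "\<dots> \<le> (\<Sum>i<N. \<integral>\<^sup>+ \<omega>. ennreal (\<bar>\<phi> (snd \<omega> i)\<bar> ^ 4) \<partial>J)"
    proof (rule sum_mono)
      fix i assume "i \<in> {..<N}"
      then have "(\<integral>\<^sup>+ \<omega>. ennreal \<bar>real_cond_exp J F (\<lambda>\<omega>'. \<bar>\<phi> (snd \<omega>' i)\<bar> ^ 4) \<omega>\<bar> \<partial>J)
         \<le> (\<integral>\<^sup>+ \<omega>. ennreal \<bar>\<bar>\<phi> (snd \<omega> i)\<bar> ^ 4\<bar> \<partial>J)"
        by (intro cond_exp_abs_int[OF sf] gm) simp
      then show "(\<integral>\<^sup>+ \<omega>. ennreal \<bar>real_cond_exp J F (\<lambda>\<omega>'. \<bar>\<phi> (snd \<omega>' i)\<bar> ^ 4) \<omega>\<bar> \<partial>J)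
         \<le> (\<integral>\<^sup>+ \<omega>. ennreal (\<bar>\<phi> (snd \<omega> i)\<bar> ^ 4) \<partial>J)" by simp
    qed
    also have "\<dots> = (\<integral>\<^sup>+ \<omega>. (\<Sum>i<N. ennreal (\<bar>\<phi> (snd \<omega> i)\<bar> ^ 4)) \<partial>J)"
      by (rule nn_integral_sum[symmetric]) (use gem in auto)
    finally show ?thesis .
  qed
  have GN: "ennreal (1 / real N) * (\<integral>\<^sup>+ \<omega>. (\<Sum>i<N. ennreal (\<bar>\<phi> (snd \<omega> i)\<bar> ^ 4)) \<partial>J) \<le> ennreal (1 / (1 - \<epsilon>)) * B"
  proof -
    have "ennreal (1 / real N) * (\<integral>\<^sup>+ \<omega>. (\<Sum>i<N. ennreal (\<bar>\<phi> (snd \<omega> i)\<bar> ^ 4)) \<partial>J)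
        \<le> ennreal (1 / real N) * (ennreal (1 / (1 - \<epsilon>)) * E)"
      by (rule mult_left_mono[OF G_le]) simp
    then show ?thesis unfolding B_eq by (simp add: ac_simps)
  qed
  have Dfst: "(\<integral>\<^sup>+ \<omega>. ennreal (1 / real N) * (\<Sum>i<N. \<delta> (fst \<omega> i)) \<partial>J) \<le> B"
  proof -
    have "(\<lambda>c::('x,'y) cloud. ennreal (1 / real N) * (\<Sum>i<N. \<delta> (c i))) \<in> borel_measurable ?C"
      using dsum_m by measurable
    then have "(\<integral>\<^sup>+ \<omega>. ennreal (1 / real N) * (\<Sum>i<N. \<delta> (fst \<omega> i)) \<partial>J)
        \<le> (\<integral>\<^sup>+ c. ennreal (1 / real N) * (\<Sum>i<N. \<delta> (c i)) \<partial>L)"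
      unfolding J_def L_def by (rule R.J_fst[OF pi beta_meas])
    then show ?thesis unfolding B_def L_d[OF N] .
  qed
  have c1: "(\<integral>\<^sup>+ \<omega>. ennreal \<bar>(\<Sum>i<N. \<bar>\<phi> (snd \<omega> i)\<bar> ^ 4) / real N
          - (\<Sum>i<N. real_cond_exp J F (\<lambda>\<omega>'. \<bar>\<phi> (snd \<omega>' i)\<bar> ^ 4) \<omega>) / real N\<bar> \<partial>J)
       \<le> ennreal (2 / (1 - \<epsilon>)) * ennreal M * ?s * nphi"
  proof -
    have "(\<integral>\<^sup>+ \<omega>. ennreal \<bar>(\<Sum>i<N. \<bar>\<phi> (snd \<omega> i)\<bar> ^ 4) / real N
          - (\<Sum>i<N. real_cond_exp J F (\<lambda>\<omega>'. \<bar>\<phi> (snd \<omega>' i)\<bar> ^ 4) \<omega>) / real N\<bar> \<partial>J)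
      \<le> (\<integral>\<^sup>+ \<omega>. ennreal (1 / real N) * (\<Sum>i<N. ennreal (\<bar>\<phi> (snd \<omega> i)\<bar> ^ 4))
           + ennreal (1 / real N) * (\<Sum>i<N. ennreal \<bar>real_cond_exp J F (\<lambda>\<omega>'. \<bar>\<phi> (snd \<omega>' i)\<bar> ^ 4) \<omega>\<bar>) \<partial>J)"
    proof (rule nn_integral_mono)
      fix \<omega> :: "('x,'y) cloud \<times> ('x,'y) cloud"
      let ?a = "(\<Sum>i<N. \<bar>\<phi> (snd \<omega> i)\<bar> ^ 4) / real N"
      let ?b = "(\<Sum>i<N. real_cond_exp J F (\<lambda>\<omega>'. \<bar>\<phi> (snd \<omega>' i)\<bar> ^ 4) \<omega>) / real N"
      have a0: "\<bar>?a\<bar> = ?a" by (simp add: sum_nonneg)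
      have "ennreal \<bar>?a - ?b\<bar> \<le> ennreal \<bar>?a\<bar> + ennreal \<bar>?b\<bar>" by (rule L_c)
      also have "ennreal \<bar>?a\<bar> = ennreal (1 / real N) * (\<Sum>i<N. ennreal (\<bar>\<phi> (snd \<omega> i)\<bar> ^ 4))"
        unfolding a0 by (rule L_a) simp
      also have "ennreal \<bar>?b\<bar> \<le> ennreal (1 / real N) * (\<Sum>i<N. ennreal \<bar>real_cond_exp J F (\<lambda>\<omega>'. \<bar>\<phi> (snd \<omega>' i)\<bar> ^ 4) \<omega>\<bar>)"
        by (rule L_b)
      finally show "ennreal \<bar>?a - ?b\<bar> \<le> ennreal (1 / real N) * (\<Sum>i<N. ennreal (\<bar>\<phi> (snd \<omega> i)\<bar> ^ 4))
           + ennreal (1 / real N) * (\<Sum>i<N. ennreal \<bar>real_cond_exp J F (\<lambda>\<omega>'. \<bar>\<phi> (snd \<omega>' i)\<bar> ^ 4) \<omega>\<bar>)"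
        by simp
    qed
    also have "\<dots> = ennreal (1 / real N) * (\<integral>\<^sup>+ \<omega>. (\<Sum>i<N. ennreal (\<bar>\<phi> (snd \<omega> i)\<bar> ^ 4)) \<partial>J)
           + ennreal (1 / real N) * (\<integral>\<^sup>+ \<omega>. (\<Sum>i<N. ennreal \<bar>real_cond_exp J F (\<lambda>\<omega>'. \<bar>\<phi> (snd \<omega>' i)\<bar> ^ 4) \<omega>\<bar>) \<partial>J)"
      using Gm Rm by (simp add: nn_integral_add nn_integral_cmult)
    also have "\<dots> \<le> ennreal (1 / real N) * (\<integral>\<^sup>+ \<omega>. (\<Sum>i<N. ennreal (\<bar>\<phi> (snd \<omega> i)\<bar> ^ 4)) \<partial>J)
           + ennreal (1 / real N) * (\<integral>\<^sup>+ \<omega>. (\<Sum>i<N. ennreal (\<bar>\<phi> (snd \<omega> i)\<bar> ^ 4)) \<partial>J)"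
      by (intro add_left_mono mult_left_mono R_le) simp
    also have "\<dots> \<le> ennreal (1 / (1 - \<epsilon>)) * B + ennreal (1 / (1 - \<epsilon>)) * B"
      by (intro add_mono GN)
    also have "\<dots> = ennreal (2 / (1 - \<epsilon>)) * B"
    proof -
      have "ennreal (1 / (1 - \<epsilon>)) + ennreal (1 / (1 - \<epsilon>)) = ennreal (2 / (1 - \<epsilon>))"
        using eps by (simp add: ennreal_plus[symmetric])
      then show ?thesis by (metis distrib_right)
    qed
    also have "\<dots> \<le> ennreal (2 / (1 - \<epsilon>)) * (ennreal M * ?s * nphi)"
      by (rule mult_left_mono[OF B_le]) simp
    finally show ?thesis by (simp add: ac_simps)
  qed
  have c2: "(\<integral>\<^sup>+ \<omega>. ennreal \<bar>(\<Sum>i<N. real_cond_exp J F (\<lambda>\<omega>'. \<bar>\<phi> (snd \<omega>' i)\<bar> ^ 4) \<omega>) / real N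
          - enn2real ((\<Sum>i<N. \<delta> (fst \<omega> i)) / of_nat N)\<bar> \<partial>J)
       \<le> ennreal ((2 - \<epsilon>) / (1 - \<epsilon>)) * ennreal M * ?s * nphi"
  proof -
    have "(\<integral>\<^sup>+ \<omega>. ennreal \<bar>(\<Sum>i<N. real_cond_exp J F (\<lambda>\<omega>'. \<bar>\<phi> (snd \<omega>' i)\<bar> ^ 4) \<omega>) / real N
          - enn2real ((\<Sum>i<N. \<delta> (fst \<omega> i)) / of_nat N)\<bar> \<partial>J)
      \<le> (\<integral>\<^sup>+ \<omega>. ennreal (1 / real N) * (\<Sum>i<N. ennreal \<bar>real_cond_exp J F (\<lambda>\<omega>'. \<bar>\<phi> (snd \<omega>' i)\<bar> ^ 4) \<omega>\<bar>)
           + ennreal (1 / real N) * (\<Sum>i<N. \<delta> (fst \<omega> i)) \<partial>J)"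
    proof (rule nn_integral_mono)
      fix \<omega> :: "('x,'y) cloud \<times> ('x,'y) cloud"
      let ?b = "(\<Sum>i<N. real_cond_exp J F (\<lambda>\<omega>'. \<bar>\<phi> (snd \<omega>' i)\<bar> ^ 4) \<omega>) / real N"
      let ?d = "enn2real ((\<Sum>i<N. \<delta> (fst \<omega> i)) / of_nat N)"
      have "ennreal \<bar>?b - ?d\<bar> \<le> ennreal \<bar>?b\<bar> + ennreal \<bar>?d\<bar>" by (rule L_c)
      also have "ennreal \<bar>?b\<bar> \<le> ennreal (1 / real N) * (\<Sum>i<N. ennreal \<bar>real_cond_exp J F (\<lambda>\<omega>'. \<bar>\<phi> (snd \<omega>' i)\<bar> ^ 4) \<omega>\<bar>)"
        by (rule L_b)
      also have "ennreal \<bar>?d\<bar> \<le> ennreal (1 / real N) * (\<Sum>i<N. \<delta> (fst \<omega> i))"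
        using L_e[of "(\<Sum>i<N. \<delta> (fst \<omega> i)) / of_nat N"] unfolding L_d[OF N] by simp
      finally show "ennreal \<bar>?b - ?d\<bar> \<le> ennreal (1 / real N) * (\<Sum>i<N. ennreal \<bar>real_cond_exp J F (\<lambda>\<omega>'. \<bar>\<phi> (snd \<omega>' i)\<bar> ^ 4) \<omega>\<bar>)
           + ennreal (1 / real N) * (\<Sum>i<N. \<delta> (fst \<omega> i))"
        by simp
    qed
    also have "\<dots> = ennreal (1 / real N) * (\<integral>\<^sup>+ \<omega>. (\<Sum>i<N. ennreal \<bar>real_cond_exp J F (\<lambda>\<omega>'. \<bar>\<phi> (snd \<omega>' i)\<bar> ^ 4) \<omega>\<bar>) \<partial>J)
           + (\<integral>\<^sup>+ \<omega>. ennreal (1 / real N) * (\<Sum>i<N. \<delta> (fst \<omega> i)) \<partial>J)"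
      using Rm Dfm by (simp add: nn_integral_add nn_integral_cmult)
    also have "\<dots> \<le> ennreal (1 / real N) * (\<integral>\<^sup>+ \<omega>. (\<Sum>i<N. ennreal (\<bar>\<phi> (snd \<omega> i)\<bar> ^ 4)) \<partial>J) + B"
      by (intro add_mono mult_left_mono R_le Dfst) simp
    also have "\<dots> \<le> ennreal (1 / (1 - \<epsilon>)) * B + B"
      by (intro add_mono GN) simp
    also have "\<dots> = ennreal ((2 - \<epsilon>) / (1 - \<epsilon>)) * B"
    proof -
      have "ennreal (1 / (1 - \<epsilon>)) + 1 = ennreal (1 / (1 - \<epsilon>) + 1)"
        using eps by (simp add: ennreal_plus)
      also have "1 / (1 - \<epsilon>) + 1 = (2 - \<epsilon>) / (1 - \<epsilon>)"
        using eps by (simp add: field_simps)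
      finally have "ennreal (1 / (1 - \<epsilon>)) + 1 = ennreal ((2 - \<epsilon>) / (1 - \<epsilon>))" .
      then show ?thesis by (metis distrib_right mult_1)
    qed
    also have "\<dots> \<le> ennreal ((2 - \<epsilon>) / (1 - \<epsilon>)) * (ennreal M * ?s * nphi)"
      by (rule mult_left_mono[OF B_le]) simp
    finally show ?thesis by (simp add: ac_simps)
  qed
  have c3: "(\<integral>\<^sup>+ c. ennreal \<bar>enn2real ((\<Sum>i<N. \<delta> (c i)) / of_nat N)
          - enn2real (\<integral>\<^sup>+ z. ennreal (\<bar>\<phi> z\<bar> ^ 4)
               \<partial>opt_pred T \<rho> xs k (opt_filter pi0x T \<rho> \<beta> xs as (k - 1)))\<bar> \<partial>L)
       \<le> ?s * ennreal (M + 1) * nphi"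
  proof -
    let ?K = "\<integral>\<^sup>+ z. ennreal (\<bar>\<phi> z\<bar> ^ 4) \<partial>opt_pred T \<rho> xs k (opt_filter pi0x T \<rho> \<beta> xs as (k - 1))"
    have K_le: "?K \<le> ?s * nphi"
    proof -
      have "?K = (\<integral>\<^sup>+ z. \<delta> z \<partial>opt_filter pi0x T \<rho> \<beta> xs as (k - 1))"
        unfolding \<delta>_def by (rule R.opt_pred_int[OF R.opt_sets[OF pi] phi_meas])
      then show ?thesis using b2 by simp
    qed
    have "(\<integral>\<^sup>+ c. ennreal \<bar>enn2real ((\<Sum>i<N. \<delta> (c i)) / of_nat N) - enn2real ?K\<bar> \<partial>L)
        \<le> (\<integral>\<^sup>+ c. ennreal (1 / real N) * (\<Sum>i<N. \<delta> (c i)) + ?K \<partial>L)"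
    proof (rule nn_integral_mono)
      fix c :: "('x,'y) cloud"
      let ?d = "enn2real ((\<Sum>i<N. \<delta> (c i)) / of_nat N)"
      have "ennreal \<bar>?d - enn2real ?K\<bar> \<le> ennreal \<bar>?d\<bar> + ennreal \<bar>enn2real ?K\<bar>" by (rule L_c)
      also have "ennreal \<bar>?d\<bar> \<le> ennreal (1 / real N) * (\<Sum>i<N. \<delta> (c i))"
        using L_e[of "(\<Sum>i<N. \<delta> (c i)) / of_nat N"] unfolding L_d[OF N] by simp
      also have "ennreal \<bar>enn2real ?K\<bar> \<le> ?K" using L_e by simp
      finally show "ennreal \<bar>?d - enn2real ?K\<bar> \<le> ennreal (1 / real N) * (\<Sum>i<N. \<delta> (c i)) + ?K"
        by simp
    qed
    also have "\<dots> = (\<integral>\<^sup>+ c. ennreal (1 / real N) * (\<Sum>i<N. \<delta> (c i)) \<partial>L) + ?K"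
    proof -
      have m: "(\<lambda>c::('x,'y) cloud. ennreal (1 / real N) * (\<Sum>i<N. \<delta> (c i))) \<in> borel_measurable L"
        using meas_transfer[OF Ls dsum_m] by measurable
      show ?thesis using m by (simp add: nn_integral_add L.emeasure_space_1)
    qed
    also have "(\<integral>\<^sup>+ c. ennreal (1 / real N) * (\<Sum>i<N. \<delta> (c i)) \<partial>L) = B"
      unfolding B_def L_d[OF N] ..
    also have "B + ?K \<le> ennreal M * ?s * nphi + ?s * nphi"
      by (intro add_mono B_le K_le)
    also have "ennreal M * ?s * nphi + ?s * nphi = ?s * ennreal (M + 1) * nphi"
      using M_nonneg by (simp add: ennreal_plus distrib_left distrib_right ac_simps)
    finally show ?thesis .
  qed
  show ?thesis using c1 c2 c3 by blast
qed


end
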